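(* Let $(\Omega,c)$ be a network with states $a,x,z\in\Omega$ such that $c(u,z)=0$ for all $u\notin\{x,z\}$. Let $x=x_0,x_1,\dots,x_k=a$ be any sequence of states such that there is some $\rho>0$ for which $c(x_{i-1},x_i)\ge\rho^{-1}c(x,z)$ for $i=1,\dots,k$. Then, for the Markov chain $(X_t)$ associated with the network, $$\mathbb P\{\tau_a<\tau_z\mid X_0=x\}\ge\frac{1}{k\rho+1}.$$
   Context: A network $(\Omega,c)$ consists of a finite state space $\Omega$ and a symmetric function $c:\Omega\times\Omega\to\mathbb R_{\ge0}$ (the conductance). Its associated Markov chain has transition probabilities $P(u,v)=c(u,v)/\sum_{w\in\Omega}c(u,w)$. For a state $s$, $\tau_s=\min\{t\ge0: X_t=s\}$. *)

theory Defs
  imports Complex_Main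
begin

definition network :: "('a::finite \<Rightarrow> 'a \<Rightarrow> real) \<Rightarrow> bool" where
  "network c \<longleftrightarrow> (\<forall>u v. c u v = c v u) \<and> (\<forall>u v. 0 \<le> c u v)"

definition trans_prob :: "('a::finite \<Rightarrow> 'a \<Rightarrow> real) \<Rightarrow> 'a \<Rightarrow> 'a \<Rightarrow> real" where
  "trans_prob c u v = c u v / (\<Sum>w\<in>UNIV. c u w)"

text \<open>Probability, started at x, of the event {tau_a = n and tau_z > n}:
  sum over trajectories X_0..X_n (lists of length n+1) with X_0 = x, X_n = a,
  X_i \<noteq> a for i < n and X_i \<noteq> z for i \<le> n, of the product of transition probabilities.\<close>
definition hit_before_at :: "('a::finite \<Rightarrow> 'a \<Rightarrow> real) \<Rightarrow> 'a \<Rightarrow> 'a \<Rightarrow> 'a \<Rightarrow> nat \<Rightarrow> real" where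
  "hit_before_at c x a z n =
     (\<Sum>p\<in>{p :: 'a list. length p = Suc n \<and> p ! 0 = x \<and> p ! n = a
              \<and> (\<forall>i<n. p ! i \<noteq> a) \<and> (\<forall>i\<le>n. p ! i \<noteq> z)}.
        \<Prod>i<n. trans_prob c (p ! i) (p ! Suc i))"

text \<open>P{tau_a < tau_z | X_0 = x}, as the sum over n of P{tau_a = n < tau_z}.\<close>
definition hit_before :: "('a::finite \<Rightarrow> 'a \<Rightarrow> real) \<Rightarrow> 'a \<Rightarrow> 'a \<Rightarrow> 'a \<Rightarrow> real" where
  "hit_before c x a z = (\<Sum>n. hit_before_at c x a z n)"

end

theory Submission
  imports Defs
begin


lemma hba_0:
  assumes "a \<noteq> z"
  shows "hit_before_at c u a z 0 = (if u = a then 1 else 0)"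
proof -
  have "{p :: 'a list. length p = Suc 0 \<and> p ! 0 = u \<and> p ! 0 = a \<and> (\<forall>i<0. p ! i \<noteq> a) \<and> (\<forall>i\<le>0. p ! i \<noteq> z)} = (if u = a then {[a]} else {})"
    using assms by (auto simp: length_Suc_conv)
  then show ?thesis unfolding hit_before_at_def by simp
qed

lemma hba_Suc:
  fixes c :: "'a::finite \<Rightarrow> 'a \<Rightarrow> real"
  shows "hit_before_at c u a z (Suc n) = (if u = a \<or> u = z then 0 else (\<Sum>v\<in>UNIV. trans_prob c u v * hit_before_at c v a z n))"
proof (cases "u = a \<or> u = z")
  case True
  then have E: "{p :: 'a list. length p = Suc (Suc n) \<and> p ! 0 = u \<and> p ! Suc n = a \<and> (\<forall>i<Suc n. p ! i \<noteq> a) \<and> (\<forall>i\<le>Suc n. p ! i \<noteq> z)} = {}"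
    by fastforce
  show ?thesis using True unfolding hit_before_at_def E by simp
next
  case False
  define L where "L m w = {p :: 'a list. length p = Suc m \<and> p ! 0 = w \<and> p ! m = a \<and> (\<forall>i<m. p ! i \<noteq> a) \<and> (\<forall>i\<le>m. p ! i \<noteq> z)}" for m w
  have fin: "finite (L m w)" for m w
  proof -
    have "L m w \<subseteq> {p. set p \<subseteq> UNIV \<and> length p = Suc m}" unfolding L_def by auto
    then show ?thesis using finite_lists_length_eq[of "UNIV::'a set" "Suc m"] finite_subset by auto
  qed
  have eq: "L (Suc n) u = (\<lambda>(v,q). u # q) ` (SIGMA v:UNIV. L n v)"
  proof
    show "L (Suc n) u \<subseteq> (\<lambda>(v,q). u # q) ` (SIGMA v:UNIV. L n v)"
    proof
      fix p assume p: "p \<in> L (Suc n) u"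
      then obtain q where pq: "p = u # q" unfolding L_def by (cases p) auto
      have "length q = Suc n" "q ! n = a" using p unfolding pq L_def by auto
      moreover have "\<forall>i<n. q ! i \<noteq> a"
      proof (intro allI impI)
        fix i assume "i < n"
        then have "Suc i < Suc n" by simp
        then show "q ! i \<noteq> a" using p unfolding pq L_def by fastforce
      qed
      moreover have "\<forall>i\<le>n. q ! i \<noteq> z"
      proof (intro allI impI)
        fix i assume "i \<le> n"
        then have "Suc i \<le> Suc n" by simp
        then show "q ! i \<noteq> z" using p unfolding pq L_def by fastforce
      qed
      ultimately have "q \<in> L n (q ! 0)" unfolding L_def by auto
      then show "p \<in> (\<lambda>(v,q). u # q) ` (SIGMA v:UNIV. L n v)" using pq by force
    qed
  next
    show "(\<lambda>(v,q). u # q) ` (SIGMA v:UNIV. L n v) \<subseteq> L (Suc n) u"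
      using False unfolding L_def by (auto simp: nth_Cons split: nat.splits)
  qed
  have inj: "inj_on (\<lambda>(v,q). u # q) (SIGMA v:UNIV. L n v)"
    unfolding L_def inj_on_def by auto
  have "hit_before_at c u a z (Suc n) = (\<Sum>p\<in>L (Suc n) u. \<Prod>i<Suc n. trans_prob c (p ! i) (p ! Suc i))"
    unfolding hit_before_at_def L_def by simp
  also have "\<dots> = (\<Sum>vq\<in>(SIGMA v:UNIV. L n v). \<Prod>i<Suc n. trans_prob c ((u # snd vq) ! i) ((u # snd vq) ! Suc i))"
    unfolding eq by (subst sum.reindex[OF inj]) (simp add: case_prod_beta)
  also have "\<dots> = (\<Sum>v\<in>UNIV. \<Sum>q\<in>L n v. \<Prod>i<Suc n. trans_prob c ((u # q) ! i) ((u # q) ! Suc i))"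
    by (subst sum.Sigma) (auto simp: fin case_prod_beta)
  also have "\<dots> = (\<Sum>v\<in>UNIV. \<Sum>q\<in>L n v. trans_prob c u v * (\<Prod>i<n. trans_prob c (q ! i) (q ! Suc i)))"
  proof (rule sum.cong[OF refl], rule sum.cong[OF refl])
    fix v q assume "q \<in> L n v"
    then have "q ! 0 = v" unfolding L_def by auto
    then show "(\<Prod>i<Suc n. trans_prob c ((u # q) ! i) ((u # q) ! Suc i)) = trans_prob c u v * (\<Prod>i<n. trans_prob c (q ! i) (q ! Suc i))"
      by (subst prod.lessThan_Suc_shift) simp
  qed
  also have "\<dots> = (\<Sum>v\<in>UNIV. trans_prob c u v * hit_before_at c v a z n)"
    unfolding hit_before_at_def L_def by (simp add: sum_distrib_left)
  finally show ?thesis using False by simp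
qed



lemma tp_nonneg: "network c \<Longrightarrow> 0 \<le> trans_prob c u v"
  unfolding network_def trans_prob_def by (simp add: sum_nonneg)

lemma tp_rowsum: "network c \<Longrightarrow> (\<Sum>v\<in>UNIV. trans_prob c u v) \<le> 1"
  unfolding trans_prob_def by (simp add: sum_divide_distrib[symmetric] divide_le_eq_1)

lemma hba_nonneg:
  assumes "network c" shows "0 \<le> hit_before_at c u a z n"
  unfolding hit_before_at_def using tp_nonneg[OF assms] by (intro sum_nonneg prod_nonneg) auto

lemma H_Suc:
  fixes c :: "'a::finite \<Rightarrow> 'a \<Rightarrow> real"
  assumes "a \<noteq> z"
  shows "(\<Sum>n<Suc N. hit_before_at c u a z n) = (if u = a then 1 else 0) +
     (if u = a \<or> u = z then 0 else (\<Sum>v\<in>UNIV. trans_prob c u v * (\<Sum>n<N. hit_before_at c v a z n)))"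
proof -
  have "(\<Sum>n<Suc N. hit_before_at c u a z n) = hit_before_at c u a z 0 + (\<Sum>n<N. hit_before_at c u a z (Suc n))"
    by (subst sum.lessThan_Suc_shift) simp
  also have "(\<Sum>n<N. hit_before_at c u a z (Suc n)) = (if u = a \<or> u = z then 0 else (\<Sum>v\<in>UNIV. trans_prob c u v * (\<Sum>n<N. hit_before_at c v a z n)))"
    by (simp add: hba_Suc sum_distrib_left sum.swap[of _ "{..<N}"])
  finally show ?thesis using hba_0[OF assms] by simp
qed

lemma H_le1:
  fixes c :: "'a::finite \<Rightarrow> 'a \<Rightarrow> real"
  assumes "network c" "a \<noteq> z"
  shows "(\<Sum>n<N. hit_before_at c u a z n) \<le> 1"
proof (induction N arbitrary: u)
  case 0 then show ?case by simp
next
  case (Suc N)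
  have "(\<Sum>v\<in>UNIV. trans_prob c u v * (\<Sum>n<N. hit_before_at c v a z n)) \<le> (\<Sum>v\<in>UNIV. trans_prob c u v)"
    by (intro sum_mono mult_right_le_one_le tp_nonneg[OF assms(1)] sum_nonneg hba_nonneg[OF assms(1)] Suc.IH)
  also have "\<dots> \<le> 1" by (rule tp_rowsum[OF assms(1)])
  finally show ?case using H_Suc[OF assms(2), of c u N] assms(2) by auto
qed

lemma hb_props:
  fixes c :: "'a::finite \<Rightarrow> 'a \<Rightarrow> real"
  assumes "network c" "a \<noteq> z"
  shows "0 \<le> hit_before c u a z" "hit_before c u a z \<le> 1"
    "hit_before c u a z = (if u = a then 1 else 0) +
     (if u = a \<or> u = z then 0 else (\<Sum>v\<in>UNIV. trans_prob c u v * hit_before c v a z))"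
proof -
  have summ: "summable (hit_before_at c w a z)" for w
    by (rule summableI_nonneg_bounded[where x=1]) (use hba_nonneg[OF assms(1)] H_le1[OF assms] in auto)
  show "0 \<le> hit_before c u a z" unfolding hit_before_def
    by (rule suminf_nonneg[OF summ]) (use hba_nonneg[OF assms(1)] in auto)
  show "hit_before c u a z \<le> 1" unfolding hit_before_def
    by (rule suminf_le_const[OF summ]) (use H_le1[OF assms] in auto)
  have lim: "(\<lambda>N. \<Sum>n<N. hit_before_at c w a z n) \<longlonglongrightarrow> hit_before c w a z" for w
    unfolding hit_before_def using summ[of w] summable_LIMSEQ by blast
  have "(\<lambda>N. \<Sum>n<Suc N. hit_before_at c u a z n) \<longlonglongrightarrow> hit_before c u a z"
    using LIMSEQ_Suc[OF lim[of u]] by simp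
  moreover have "(\<lambda>N. \<Sum>n<Suc N. hit_before_at c u a z n) \<longlonglongrightarrow> (if u = a then 1 else 0) +
     (if u = a \<or> u = z then 0 else (\<Sum>v\<in>UNIV. trans_prob c u v * hit_before c v a z))"
    unfolding H_Suc[OF assms(2)]
    by (cases "u = a \<or> u = z") (auto intro!: tendsto_add tendsto_sum tendsto_mult[OF tendsto_const lim])
  ultimately show "hit_before c u a z = (if u = a then 1 else 0) +
     (if u = a \<or> u = z then 0 else (\<Sum>v\<in>UNIV. trans_prob c u v * hit_before c v a z))"
    using LIMSEQ_unique by blast
qed



lemma cs_sum:
  fixes D :: "nat \<Rightarrow> real" assumes "k > 0"
  shows "(\<Sum>i<k. D i)^2 \<le> real k * (\<Sum>i<k. (D i)^2)"
proof -
  define S where "S = (\<Sum>i<k. D i)"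
  define m where "m = S / real k"
  have "0 \<le> (\<Sum>i<k. (D i - m)^2)" by (intro sum_nonneg) auto
  also have "\<dots> = (\<Sum>i<k. (D i)^2) - 2 * m * S + real k * m^2"
    by (simp add: power2_diff sum_subtractf sum.distrib sum_distrib_left S_def algebra_simps)
  also have "\<dots> = (\<Sum>i<k. (D i)^2) - S^2 / real k"
    using assms by (simp add: m_def power2_eq_square field_simps)
  finally have "S^2 / real k \<le> (\<Sum>i<k. (D i)^2)" by simp
  then show ?thesis using assms by (simp add: S_def field_simps)
qed

lemma main_inj:
  fixes c :: "'a::finite \<Rightarrow> 'a \<Rightarrow> real"
    and a x z :: 'a and xs :: "nat \<Rightarrow> 'a" and k :: nat and \<rho> :: real
  assumes net: "network c"
    and xz: "x \<noteq> z" and az: "a \<noteq> z"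
    and cpos: "c x z > 0"
    and cz: "\<And>u. u \<notin> {x, z} \<Longrightarrow> c u z = 0"
    and x0: "xs 0 = x" and xk: "xs k = a"
    and rho: "\<rho> > 0"
    and edge: "\<And>i. i < k \<Longrightarrow> c (xs i) (xs (Suc i)) \<ge> c x z / \<rho>"
    and inj: "inj_on xs {..k}"
  shows "hit_before c x a z \<ge> 1 / (real k * \<rho> + 1)"
proof -
  define h where "h u = hit_before c u a z" for u
  have sym: "c u v = c v u" for u v using net unfolding network_def by auto
  have cnn: "0 \<le> c u v" for u v using net unfolding network_def by auto
  have h01: "0 \<le> h u" "h u \<le> 1" for u unfolding h_def using hb_props[OF net az] by auto
  have heq: "h u = (if u = a then 1 else 0) + (if u = a \<or> u = z then 0 else (\<Sum>v\<in>UNIV. trans_prob c u v * h v))" for u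
    unfolding h_def using hb_props(3)[OF net az] by simp
  have ha: "h a = 1" using heq[of a] by simp
  have hz: "h z = 0" using heq[of z] az by simp
  define F where "F u = (\<Sum>v\<in>UNIV. c u v * (h u - h v))" for u
  have harm: "F u = 0" if "u \<noteq> a" "u \<noteq> z" for u
  proof (cases "(\<Sum>w\<in>UNIV. c u w) = 0")
    case True
    then have "c u v = 0" for v using sum_nonneg_eq_0_iff[of UNIV "c u"] cnn by auto
    then show ?thesis unfolding F_def by simp
  next
    case False
    define d where "d = (\<Sum>w\<in>UNIV. c u w)"
    have "h u = (\<Sum>v\<in>UNIV. c u v / d * h v)" using heq[of u] that unfolding trans_prob_def d_def by simp
    then have "d * h u = (\<Sum>v\<in>UNIV. d * (c u v / d * h v))" by (simp add: sum_distrib_left)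
    also have "\<dots> = (\<Sum>v\<in>UNIV. c u v * h v)" using False unfolding d_def by simp
    finally have "d * h u = (\<Sum>v\<in>UNIV. c u v * h v)" .
    moreover have "(\<Sum>v\<in>UNIV. c u v * h u) = d * h u" unfolding d_def by (simp add: sum_distrib_right)
    ultimately show ?thesis unfolding F_def by (simp add: right_diff_distrib sum_subtractf)
  qed
  have sumF: "(\<Sum>u\<in>UNIV. F u) = 0"
  proof -
    have "(\<Sum>u\<in>UNIV. F u) = (\<Sum>u\<in>UNIV. \<Sum>v\<in>UNIV. c v u * (h v - h u))"
      unfolding F_def by (rule sum.swap)
    also have "\<dots> = - (\<Sum>u\<in>UNIV. F u)"
      unfolding F_def by (simp add: sum_negf[symmetric] sym algebra_simps)
    finally show ?thesis by simp
  qed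
  define E where "E = (\<Sum>u\<in>UNIV. \<Sum>v\<in>UNIV. c u v * (h u - h v)^2)"
  have EF: "E = 2 * (\<Sum>u\<in>UNIV. h u * F u)"
  proof -
    define A where "A = (\<Sum>u\<in>UNIV. \<Sum>v\<in>UNIV. c u v * (h u - h v) * h u)"
    have A1: "(\<Sum>u\<in>UNIV. h u * F u) = A" unfolding A_def F_def by (simp add: sum_distrib_left algebra_simps)
    have "A = (\<Sum>u\<in>UNIV. \<Sum>v\<in>UNIV. c v u * (h v - h u) * h v)" unfolding A_def by (rule sum.swap)
    also have "\<dots> = (\<Sum>u\<in>UNIV. \<Sum>v\<in>UNIV. c u v * (h v - h u) * h v)" by (simp add: sym)
    finally have A2: "A = (\<Sum>u\<in>UNIV. \<Sum>v\<in>UNIV. c u v * (h v - h u) * h v)" .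
    have "E = (\<Sum>u\<in>UNIV. \<Sum>v\<in>UNIV. c u v * (h u - h v) * h u + c u v * (h v - h u) * h v)"
      unfolding E_def by (intro sum.cong refl) (simp add: power2_eq_square algebra_simps)
    also have "\<dots> = A + (\<Sum>u\<in>UNIV. \<Sum>v\<in>UNIV. c u v * (h v - h u) * h v)"
      by (simp add: sum.distrib A_def)
    finally have "E = A + A" using A2 by simp
    then show ?thesis using A1 by simp
  qed
  have Fpt: "F u = (if u = a then F a else 0) + (if u = z then F z else 0)" for u
    using harm[of u] az by auto
  have "(\<Sum>u\<in>UNIV. F u) = F a + F z"
    by (subst Fpt) (simp add: sum.distrib)
  then have Faz: "F a = - F z" using sumF by simp
  have "h u * F u = (if u = a then F a else 0)" for u
    using harm[of u] ha hz by auto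
  then have "(\<Sum>u\<in>UNIV. h u * F u) = F a" by simp
  then have Ehalf: "E = 2 * F a" using EF by simp
  have "c z v * h v = (if v = x then c x z * h x else 0)" for v
    using cz[of v] hz sym[of z v] by auto
  then have "F z = - (c x z * h x)" unfolding F_def using hz
    by (simp add: sum_negf)
  then have Eval: "E = 2 * (c x z * h x)" using Ehalf Faz by simp
  have noz: "xs i \<noteq> z" if "i \<le> k" for i
  proof
    assume xi: "xs i = z"
    have "i \<noteq> 0" using xi x0 xz by (cases i) auto
    moreover have "i \<noteq> k" using xi xk az by auto
    ultimately have "i < k" "0 < i" using that by auto
    then have "c (xs i) (xs (Suc i)) > 0" using edge[of i] cpos rho
      by (meson divide_pos_pos less_le_trans)
    then have "c (xs (Suc i)) z > 0" using xi sym by simp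
    then have "xs (Suc i) \<in> {x, z}" using cz by fastforce
    then have "xs (Suc i) = xs 0 \<or> xs (Suc i) = xs i" using x0 xi by auto
    moreover have "Suc i \<in> {..k}" "i \<in> {..k}" "0 \<in> {..k}" using \<open>i < k\<close> by auto
    ultimately show False using inj_onD[OF inj, of "Suc i" 0] inj_onD[OF inj, of "Suc i" i] by auto
  qed
  define g where "g p = c (fst p) (snd p) * (h (fst p) - h (snd p))^2" for p
  have gnn: "0 \<le> g p" for p unfolding g_def using cnn by simp
  have gsym: "g (prod.swap p) = g p" for p unfolding g_def by (simp add: sym power2_commute)
  define e where "e i = (xs i, xs (Suc i))" for i
  define S where "S = insert (x, z) (e ` {..<k})"
  define T where "T = prod.swap ` S"
  have ST: "S \<inter> T = {}"
  proof (rule ccontr)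
    assume "S \<inter> T \<noteq> {}"
    then obtain p where p: "p \<in> S" "prod.swap p \<in> S" unfolding T_def
      by (auto simp: image_iff) (metis swap_swap)
    show False
    proof (cases "p = (x, z)")
      case True
      then have "(z, x) \<in> S" using p by simp
      then obtain i where "i < k" "(z, x) = e i" unfolding S_def using xz by auto
      then have "xs i = z" "i \<le> k" unfolding e_def by auto
      then show ?thesis using noz[of i] by simp
    next
      case False
      then obtain i where i: "i < k" "p = e i" using p unfolding S_def by auto
      show ?thesis
      proof (cases "prod.swap p = (x, z)")
        case True
        then have "xs i = z" using i unfolding e_def by simp
        then show ?thesis using i(1) noz[of i] by simp
      next
        case False
        then obtain j where j: "j < k" "prod.swap p = e j" using p unfolding S_def by auto
        have "xs (Suc i) = xs j" "xs i = xs (Suc j)" using i j unfolding e_def by auto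
        then have "Suc i = j" "i = Suc j" using inj i j unfolding inj_on_def by auto
        then show ?thesis by simp
      qed
    qed
  qed
  have "(\<Sum>p\<in>S. g p) + (\<Sum>p\<in>T. g p) = (\<Sum>p\<in>S \<union> T. g p)"
    using ST by (simp add: sum.union_disjoint)
  also have "\<dots> \<le> (\<Sum>p\<in>UNIV. g p)" by (rule sum_mono2) (auto simp: gnn)
  also have "\<dots> = E" unfolding E_def g_def
    by (simp add: sum.cartesian_product case_prod_beta)
  finally have E1: "(\<Sum>p\<in>S. g p) + (\<Sum>p\<in>T. g p) \<le> E" .
  have "(\<Sum>p\<in>T. g p) = (\<Sum>p\<in>S. g p)" unfolding T_def
    by (subst sum.reindex) (auto simp: gsym)
  moreover have "(\<Sum>p\<in>S. g p) = g (x, z) + (\<Sum>i<k. g (e i))"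
  proof -
    have "(x, z) \<notin> e ` {..<k}"
    proof
      assume "(x, z) \<in> e ` {..<k}"
      then obtain i where "i < k" "xs (Suc i) = z" unfolding e_def by auto
      then show False using noz[of "Suc i"] by simp
    qed
    moreover have "inj_on e {..<k}" unfolding e_def inj_on_def using inj unfolding inj_on_def by auto
    ultimately show ?thesis unfolding S_def by (simp add: sum.reindex)
  qed
  ultimately have E2: "2 * (g (x, z) + (\<Sum>i<k. g (e i))) \<le> E" using E1 by simp
  have gxz: "g (x, z) = c x z * (h x)^2" unfolding g_def using hz by simp
  define D where "D i = h (xs (Suc i)) - h (xs i)" for i
  have tel: "(\<Sum>i<k. D i) = 1 - h x" unfolding D_def using sum_lessThan_telescope[of "\<lambda>i. h (xs i)" k] x0 xk ha by simp
  have gD: "(c x z / \<rho>) * (\<Sum>i<k. (D i)^2) \<le> (\<Sum>i<k. g (e i))"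
    unfolding sum_distrib_left
  proof (rule sum_mono)
    fix i assume "i \<in> {..<k}"
    then have "c x z / \<rho> \<le> c (xs i) (xs (Suc i))" using edge by auto
    then have "c x z / \<rho> * (D i)^2 \<le> c (xs i) (xs (Suc i)) * (D i)^2"
      by (rule mult_right_mono) simp
    then show "c x z / \<rho> * (D i)^2 \<le> g (e i)" unfolding g_def e_def D_def
      by (simp add: power2_commute)
  qed
  define y where "y = h x"
  have key: "c x z * y \<ge> c x z * y^2 + (\<Sum>i<k. g (e i))" using E2 Eval gxz unfolding y_def by simp
  show ?thesis
  proof (cases "y = 1")
    case True
    have "0 \<le> real k * \<rho>" using rho by simp
    then have "1 / (real k * \<rho> + 1) \<le> 1" by (simp add: divide_le_eq)
    then show ?thesis using True unfolding y_def h_def by simp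
  next
    case False
    then have y1: "y < 1" using h01[of x] unfolding y_def by simp
    then have kpos: "k > 0" using x0 xk ha unfolding y_def by (cases k) auto
    have "(1 - y)^2 \<le> real k * (\<Sum>i<k. (D i)^2)" using cs_sum[OF kpos, of D] tel unfolding y_def by simp
    then have "(c x z / \<rho>) * (1 - y)^2 \<le> (c x z / \<rho>) * (real k * (\<Sum>i<k. (D i)^2))"
      using cpos rho by (intro mult_left_mono) auto
    also have "\<dots> = real k * ((c x z / \<rho>) * (\<Sum>i<k. (D i)^2))" by simp
    also have "\<dots> \<le> real k * (\<Sum>i<k. g (e i))" using gD by (intro mult_left_mono) auto
    also have "\<dots> \<le> real k * (c x z * y - c x z * y^2)" using key by (simp add: mult_left_mono)
    finally have "(c x z / \<rho>) * (1 - y)^2 \<le> c x z * (real k * (y * (1 - y)))"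
      by (simp add: power2_eq_square algebra_simps)
    then have "c x z * ((1 - y)^2 / \<rho>) \<le> c x z * (real k * (y * (1 - y)))" by (simp add: times_divide_eq_left)
    then have "(1 - y)^2 / \<rho> \<le> real k * (y * (1 - y))" using cpos by (rule mult_left_le_imp_le)
    then have "(1 - y)^2 \<le> real k * \<rho> * y * (1 - y)" using rho by (simp add: field_simps)
    then have "(1 - y) * (1 - y) \<le> (real k * \<rho> * y) * (1 - y)" by (simp add: power2_eq_square algebra_simps)
    then have "1 - y \<le> real k * \<rho> * y" using y1 by simp
    then have "1 \<le> y * (real k * \<rho> + 1)" by (simp add: algebra_simps)
    moreover have "0 \<le> real k * \<rho>" using rho by simp
    then have "real k * \<rho> + 1 > 0" by linarith
    ultimately show ?thesis unfolding y_def h_def by (simp add: divide_le_eq mult.commute)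
  qed
qed



lemma reduce:
  fixes c :: "'a::finite \<Rightarrow> 'a \<Rightarrow> real"
    and a x z :: 'a and k :: nat and \<rho> :: real
  assumes net: "network c"
    and xz: "x \<noteq> z" and az: "a \<noteq> z"
    and cpos: "c x z > 0"
    and cz: "\<And>u. u \<notin> {x, z} \<Longrightarrow> c u z = 0"
    and rho: "\<rho> > 0"
  shows "\<And>xs. xs 0 = x \<Longrightarrow> xs k = a \<Longrightarrow> (\<And>i. i < k \<Longrightarrow> c (xs i) (xs (Suc i)) \<ge> c x z / \<rho>)
     \<Longrightarrow> hit_before c x a z \<ge> 1 / (real k * \<rho> + 1)"
proof (induction k rule: less_induct)
  case (less k xs)
  show ?case
  proof (cases "inj_on xs {..k}")
    case True
    then show ?thesis using main_inj[OF net xz az cpos cz less.prems(1,2) rho less.prems(3) True] by blast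
  next
    case False
    then obtain p q where pq: "p \<le> k" "q \<le> k" "p \<noteq> q" "xs p = xs q"
      unfolding inj_on_def by auto
    obtain i j where ij: "i < j" "j \<le> k" "xs i = xs j"
    proof (cases "p < q")
      case True then show ?thesis using that pq by auto
    next
      case False then have "q < p" using pq by auto
      then show ?thesis using that pq by auto
    qed
    define k' where "k' = k - (j - i)"
    define ys where "ys m = (if m \<le> i then xs m else xs (m + (j - i)))" for m
    have kk: "k' < k" unfolding k'_def using ij by auto
    have y0: "ys 0 = x" unfolding ys_def using less.prems(1) by simp
    have yk: "ys k' = a"
    proof (cases "k' \<le> i")
      case True
      then have "k' = i" "j = k" unfolding k'_def using ij by auto
      then show ?thesis unfolding ys_def using ij less.prems(2) by simp
    next
      case False
      then have "k' + (j - i) = k" unfolding k'_def using ij by auto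
      then show ?thesis unfolding ys_def using False less.prems(2) by simp
    qed
    have ye: "c (ys m) (ys (Suc m)) \<ge> c x z / \<rho>" if "m < k'" for m
    proof -
      consider "Suc m \<le> i" | "m = i" | "i < m" by linarith
      then show ?thesis
      proof cases
        case 1
        then show ?thesis unfolding ys_def using less.prems(3)[of m] ij by auto
      next
        case 2
        then have "j < k" using that unfolding k'_def using ij by auto
        moreover have "Suc m + (j - i) = Suc j" using 2 ij by auto
        ultimately show ?thesis unfolding ys_def using less.prems(3)[of j] ij 2 by auto
      next
        case 3
        have "m + (j - i) < k" using that unfolding k'_def using ij by auto
        moreover have "Suc m + (j - i) = Suc (m + (j - i))" by simp
        ultimately show ?thesis unfolding ys_def using less.prems(3)[of "m + (j - i)"] 3 by auto
      qed
    qed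
    have "1 / (real k' * \<rho> + 1) \<le> hit_before c x a z"
      using less.IH[OF kk y0 yk ye] by blast
    moreover have "1 / (real k * \<rho> + 1) \<le> 1 / (real k' * \<rho> + 1)"
    proof -
      have "0 \<le> real k' * \<rho>" using rho by simp
      moreover have "real k' * \<rho> \<le> real k * \<rho>" using kk rho by (intro mult_right_mono) auto
      ultimately show ?thesis by (intro divide_left_mono) (auto intro: add_pos_nonneg)
    qed
    ultimately show ?thesis by linarith
  qed
qed

theorem lemmaC5:
  fixes c :: "'a::finite \<Rightarrow> 'a \<Rightarrow> real"
    and a x z :: 'a and xs :: "nat \<Rightarrow> 'a" and k :: nat and \<rho> :: real
  assumes "network c"
    and "x \<noteq> z" and "a \<noteq> z"
    and "c x z > 0"
    and "\<And>u. u \<notin> {x, z} \<Longrightarrow> c u z = 0"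
    and "xs 0 = x" and "xs k = a"
    and "\<rho> > 0"
    and "\<And>i. 1 \<le> i \<Longrightarrow> i \<le> k \<Longrightarrow> c (xs (i - 1)) (xs i) \<ge> c x z / \<rho>"
  shows "hit_before c x a z \<ge> 1 / (real k * \<rho> + 1)"
proof -
  have e: "c (xs i) (xs (Suc i)) \<ge> c x z / \<rho>" if "i < k" for i
    using assms(9)[of "Suc i"] that by simp
  show ?thesis using reduce[OF assms(1-5,8) assms(6,7) e] by blast
qed

end
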